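(* If $A$ is a uniform Kan complex, then the canonical map $p:A^{\mathrm{I}}\to A\times A$ admits the structure of a uniform Kan fibration.
   Context: Let $\mathbb{B}$ be the category of finite sets $[n]=\{\bot,x_1,\dots,x_n,\top\}$ ($n\ge0$, $\bot\ne\top$) and functions preserving $\bot,\top$; cartesian cubical sets are presheaves on $\mathbb{B}^{op}$. $\mathrm{I}^n$ is the representable on $[n]$, $\mathrm{I}^n\cong\mathrm{I}\times\dots\times\mathrm{I}$, $\mathrm{I}=\mathrm{I}^1$; the two maps $[1]\to[0]$ give endpoints $0,1:1\to\mathrm{I}$, and $p:A^{\mathrm{I}}\to A^{\partial\mathrm{I}}\cong A\times A$ is induced by the copairing $\partial\mathrm{I}=1+1\to\mathrm{I}$. For $1\le i\le n$, $d\in\{0,1\}$, the face $\alpha_i^d:\mathrm{I}^{n-1}\to\mathrm{I}^n$ inserts $d$ in coordinate $i$; for $e\in\{0,1\}$ the open box $\sqcup^n_e\rightarrowtail\mathrm{I}^n$ is the union of the images of all faces $\alpha_i^d$ with $(i,d)\ne(1,e)$, with inclusion $i^n_e$. A uniform Kan fibration structure on $f:Y\to X$ consists of, for each $n\ge1$, $e\in\{0,1\}$, $k\ge1$ and each commutative square $b:\mathrm{I}^k\times\sqcup^n_e\to Y$, $a:\mathrm{I}^k\times\mathrm{I}^n\to X$ with $fb=a(1\times i^n_e)$, a chosen filler $\phi(a,b):\mathrm{I}^k\times\mathrm{I}^n\to Y$ with $\phi(a,b)(1\times i^n_e)=b$ and $f\phi(a,b)=a$, such that $\phi(a,b)\circ(\alpha\times1)=\phi(a(\alpha\times1),b(\alpha\times1))$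 for all $\alpha:\mathrm{I}^j\to\mathrm{I}^k$ ($j\ge1$). A uniform Kan complex is a cubical set $A$ with a uniform Kan fibration structure on $A\to1$. *)

theory Defs
  imports Main
begin

section \<open>The category B of bipointed finite sets\<close>

text \<open>The object [n] = {bot, x_1, ..., x_n, top}; points are encoded by pt.\<close>
datatype pt = Bot | Top | Var nat

definition pts :: "nat \<Rightarrow> pt set" where
  "pts n = {Bot, Top} \<union> Var ` {1..n}"

definition hom :: "nat \<Rightarrow> nat \<Rightarrow> (pt \<Rightarrow> pt) set" where
  "hom n m = {f. f Bot = Bot \<and> f Top = Top \<and> (\<forall>x\<in>pts n. f x \<in> pts m)
                 \<and> (\<forall>x. x \<notin> pts n \<longrightarrow> f x = Bot)}"

definition idB :: "nat \<Rightarrow> pt \<Rightarrow> pt" where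
  "idB n = (\<lambda>x. if x \<in> pts n then x else Bot)"

definition endpt :: "bool \<Rightarrow> pt" where
  "endpt d = (if d then Top else Bot)"

section \<open>Cartesian cubical sets = functors B -> Set (presheaves on B^op)\<close>

record 'a cset =
  cells :: "nat \<Rightarrow> 'a set"
  act :: "nat \<Rightarrow> nat \<Rightarrow> (pt \<Rightarrow> pt) \<Rightarrow> 'a \<Rightarrow> 'a"

definition is_cset :: "'a cset \<Rightarrow> bool" where
  "is_cset X \<longleftrightarrow>
     (\<forall>n m f x. f \<in> hom n m \<longrightarrow> x \<in> cells X n \<longrightarrow> act X n m f x \<in> cells X m) \<and>
     (\<forall>n x. x \<in> cells X n \<longrightarrow> act X n n (idB n) x = x) \<and>
     (\<forall>n m l f g x. f \<in> hom n m \<longrightarrow> g \<in> hom m l \<longrightarrow> x \<in> cells X n \<longrightarrow>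
        act X m l g (act X n m f x) = act X n l (g \<circ> f) x)"

definition is_cmap :: "'a cset \<Rightarrow> 'b cset \<Rightarrow> (nat \<Rightarrow> 'a \<Rightarrow> 'b) \<Rightarrow> bool" where
  "is_cmap X Y F \<longleftrightarrow>
     (\<forall>n x. x \<in> cells X n \<longrightarrow> F n x \<in> cells Y n) \<and>
     (\<forall>n m f x. f \<in> hom n m \<longrightarrow> x \<in> cells X n \<longrightarrow>
        F m (act X n m f x) = act Y n m f (F n x))"

text \<open>A map from a subpresheaf S of the representable I^N (= y[N], with
  I^N([m]) = hom N m, action by postcomposition) into Y, stored extensionally
  (undefined outside S).\<close>
definition is_sub_map :: "nat \<Rightarrow> (nat \<Rightarrow> (pt \<Rightarrow> pt) set) \<Rightarrow> 'y cset
    \<Rightarrow> (nat \<Rightarrow> (pt \<Rightarrow> pt) \<Rightarrow> 'y) \<Rightarrow> bool" where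
  "is_sub_map N S Y b \<longleftrightarrow>
     (\<forall>m u. u \<in> S m \<longrightarrow> b m u \<in> cells Y m) \<and>
     (\<forall>m l u g. u \<in> S m \<longrightarrow> g \<in> hom m l \<longrightarrow> b l (g \<circ> u) = act Y m l g (b m u))"

definition extensional_on :: "(nat \<Rightarrow> (pt \<Rightarrow> pt) set) \<Rightarrow> (nat \<Rightarrow> (pt \<Rightarrow> pt) \<Rightarrow> 'y) \<Rightarrow> bool" where
  "extensional_on S b \<longleftrightarrow> (\<forall>m u. u \<notin> S m \<longrightarrow> b m u = undefined)"

text \<open>The full cube I^k x I^n = I^(k+n) (first k coordinates: I^k).\<close>
definition fullcube :: "nat \<Rightarrow> nat \<Rightarrow> nat \<Rightarrow> (pt \<Rightarrow> pt) set" where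
  "fullcube k n m = hom (k + n) m"

text \<open>I^k x (open box) inside I^(k+n): union of the faces x_(k+i) = d of
  I^(k+n), 1 <= i <= n, (i,d) \<noteq> (1,e).\<close>
definition boxset :: "nat \<Rightarrow> nat \<Rightarrow> bool \<Rightarrow> nat \<Rightarrow> (pt \<Rightarrow> pt) set" where
  "boxset k n e m = {u \<in> hom (k + n) m.
      \<exists>i\<in>{1..n}. \<exists>d. (i, d) \<noteq> (1, e) \<and> u (Var (k + i)) = endpt d}"

text \<open>For g : [k] -> [j] in B (i.e. alpha : I^j -> I^k), the B-map
  [k+n] -> [j+n] inducing alpha x 1 : I^j x I^n -> I^k x I^n.\<close>
definition liftB :: "nat \<Rightarrow> nat \<Rightarrow> nat \<Rightarrow> (pt \<Rightarrow> pt) \<Rightarrow> pt \<Rightarrow> pt" where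
  "liftB k j n g = (\<lambda>x. case x of Bot \<Rightarrow> Bot | Top \<Rightarrow> Top
      | Var i \<Rightarrow> if 1 \<le> i \<and> i \<le> k then g (Var i)
                 else if k < i \<and> i \<le> k + n then Var (i - k + j) else Bot)"

definition pullback_along :: "(nat \<Rightarrow> (pt \<Rightarrow> pt) set) \<Rightarrow> (pt \<Rightarrow> pt)
    \<Rightarrow> (nat \<Rightarrow> (pt \<Rightarrow> pt) \<Rightarrow> 'y) \<Rightarrow> nat \<Rightarrow> (pt \<Rightarrow> pt) \<Rightarrow> 'y" where
  "pullback_along S h b = (\<lambda>m u. if u \<in> S m then b m (u \<circ> h) else undefined)"

definition kan_square :: "'y cset \<Rightarrow> 'x cset \<Rightarrow> (nat \<Rightarrow> 'y \<Rightarrow> 'x) \<Rightarrow> nat \<Rightarrow> nat \<Rightarrow> bool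
    \<Rightarrow> (nat \<Rightarrow> (pt \<Rightarrow> pt) \<Rightarrow> 'x) \<Rightarrow> (nat \<Rightarrow> (pt \<Rightarrow> pt) \<Rightarrow> 'y) \<Rightarrow> bool" where
  "kan_square Y X F k n e a b \<longleftrightarrow>
     is_sub_map (k + n) (fullcube k n) X a \<and> extensional_on (fullcube k n) a \<and>
     is_sub_map (k + n) (boxset k n e) Y b \<and> extensional_on (boxset k n e) b \<and>
     (\<forall>m u. u \<in> boxset k n e m \<longrightarrow> F m (b m u) = a m u)"

definition is_ukf_structure :: "'y cset \<Rightarrow> 'x cset \<Rightarrow> (nat \<Rightarrow> 'y \<Rightarrow> 'x)
    \<Rightarrow> (nat \<Rightarrow> bool \<Rightarrow> nat \<Rightarrow> (nat \<Rightarrow> (pt \<Rightarrow> pt) \<Rightarrow> 'x) \<Rightarrow> (nat \<Rightarrow> (pt \<Rightarrow> pt) \<Rightarrow> 'y)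
        \<Rightarrow> nat \<Rightarrow> (pt \<Rightarrow> pt) \<Rightarrow> 'y) \<Rightarrow> bool" where
  "is_ukf_structure Y X F phi \<longleftrightarrow>
     (\<forall>n e k a b. 1 \<le> n \<longrightarrow> 1 \<le> k \<longrightarrow> kan_square Y X F k n e a b \<longrightarrow>
        is_sub_map (k + n) (fullcube k n) Y (phi n e k a b) \<and>
        (\<forall>m u. u \<in> boxset k n e m \<longrightarrow> phi n e k a b m u = b m u) \<and>
        (\<forall>m u. u \<in> fullcube k n m \<longrightarrow> F m (phi n e k a b m u) = a m u) \<and>
        (\<forall>j g. 1 \<le> j \<longrightarrow> g \<in> hom k j \<longrightarrow>
           (\<forall>m u. u \<in> fullcube j n m \<longrightarrow>
              phi n e k a b m (u \<circ> liftB k j n g) =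
              phi n e j (pullback_along (fullcube j n) (liftB k j n g) a)
                        (pullback_along (boxset j n e) (liftB k j n g) b) m u)))"

definition ukf :: "'y cset \<Rightarrow> 'x cset \<Rightarrow> (nat \<Rightarrow> 'y \<Rightarrow> 'x) \<Rightarrow> bool" where
  "ukf Y X F \<longleftrightarrow> (\<exists>phi. is_ukf_structure Y X F phi)"

definition terminal_cset :: "unit cset" where
  "terminal_cset = \<lparr>cells = (\<lambda>m. {()}), act = (\<lambda>n m f x. ())\<rparr>"

definition uniform_kan_complex :: "'a cset \<Rightarrow> bool" where
  "uniform_kan_complex A \<longleftrightarrow> ukf A terminal_cset (\<lambda>m x. ())"

text \<open>(A^I)([m]) = Hom(I^m x I, A) = A([m+1]), the path coordinate being last.\<close>
definition path_obj :: "'a cset \<Rightarrow> 'a cset" where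
  "path_obj A = \<lparr>cells = (\<lambda>m. cells A (Suc m)),
                 act = (\<lambda>n m f x. act A (Suc n) (Suc m) (liftB n m 1 f) x)\<rparr>"

definition prod_cset :: "'a cset \<Rightarrow> 'b cset \<Rightarrow> ('a \<times> 'b) cset" where
  "prod_cset A B = \<lparr>cells = (\<lambda>m. cells A m \<times> cells B m),
                    act = (\<lambda>n m f x. (act A n m f (fst x), act B n m f (snd x)))\<rparr>"

text \<open>The B-map [m+1] -> [m] sending x_(m+1) to the endpoint d (restriction
  of a path to the end d).\<close>
definition endB :: "nat \<Rightarrow> bool \<Rightarrow> pt \<Rightarrow> pt" where
  "endB m d = (\<lambda>x. if x = Var (Suc m) then endpt d else if x \<in> pts m then x else Bot)"

definition path_proj :: "'a cset \<Rightarrow> nat \<Rightarrow> 'a \<Rightarrow> 'a \<times> 'a" where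
  "path_proj A = (\<lambda>m x. (act A (Suc m) m (endB m False) x, act A (Suc m) m (endB m True) x))"

end

theory Submission imports Defs begin

lemma pts_Var[simp]: "Var i \<in> pts n \<longleftrightarrow> 1 \<le> i \<and> i \<le> n"
  by (auto simp: pts_def)
lemma pts_Bot[simp]: "Bot \<in> pts n" and pts_Top[simp]: "Top \<in> pts n"
  by (auto simp: pts_def)

lemma homD: assumes "f \<in> hom n m"
  shows "f Bot = Bot" "f Top = Top" "\<And>x. x \<in> pts n \<Longrightarrow> f x \<in> pts m"
    "\<And>x. x \<notin> pts n \<Longrightarrow> f x = Bot"
  using assms by (auto simp: hom_def)

lemma homI: "f Bot = Bot \<Longrightarrow> f Top = Top \<Longrightarrow> (\<And>x. x \<in> pts n \<Longrightarrow> f x \<in> pts m) \<Longrightarrow>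
   (\<And>x. x \<notin> pts n \<Longrightarrow> f x = Bot) \<Longrightarrow> f \<in> hom n m"
  by (auto simp: hom_def)

lemma comp_hom: "f \<in> hom n m \<Longrightarrow> g \<in> hom m l \<Longrightarrow> g \<circ> f \<in> hom n l"
  by (auto simp: hom_def)

lemma liftB_pts: "g \<in> hom k j \<Longrightarrow> x \<in> pts k \<Longrightarrow> liftB k j n g x = g x"
  by (cases x) (auto simp: liftB_def homD)

lemma pts_mono: "a \<le> b \<Longrightarrow> x \<in> pts a \<Longrightarrow> x \<in> pts b"
  by (cases x) auto

lemma liftB_hom: assumes g: "g \<in> hom k j" shows "liftB k j n g \<in> hom (k+n) (j+n)"
proof (rule homI)
  fix x assume x: "x \<in> pts (k+n)"
  show "liftB k j n g x \<in> pts (j+n)"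
  proof (cases x)
    case (Var i)
    show ?thesis
    proof (cases "1 \<le> i \<and> i \<le> k")
      case True
      then have "g x \<in> pts j" using homD(3)[OF g] Var by simp
      then have "g x \<in> pts (j+n)" by (rule pts_mono[rotated]) simp
      then show ?thesis using True Var by (simp add: liftB_def)
    next
      case False then show ?thesis using Var x by (auto simp: liftB_def)
    qed
  qed (auto simp: liftB_def)
next
  fix x assume x: "x \<notin> pts (k+n)"
  then show "liftB k j n g x = Bot" by (cases x) (auto simp: liftB_def)
qed (auto simp: liftB_def)


definition evB :: "nat \<Rightarrow> pt \<Rightarrow> pt \<Rightarrow> pt" where
  "evB m t = (\<lambda>x. if x = Var (Suc m) then t else if x \<in> pts m then x else Bot)"

definition resB :: "nat \<Rightarrow> (pt \<Rightarrow> pt) \<Rightarrow> pt \<Rightarrow> pt" where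
  "resB N v = (\<lambda>x. if x \<in> pts N then v x else Bot)"

lemma endB_evB: "endB m d = evB m (endpt d)"
  by (simp add: endB_def evB_def)

lemma evB_hom: "t \<in> pts m \<Longrightarrow> evB m t \<in> hom (Suc m) m"
  apply (rule homI)
  subgoal by (simp add: evB_def)
  subgoal by (simp add: evB_def)
  subgoal for x by (cases x) (auto simp: evB_def)
  subgoal for x by (cases x) (auto simp: evB_def)
  done

lemma resB_hom: "v \<in> hom (Suc N) m \<Longrightarrow> resB N v \<in> hom N m"
  apply (rule homI)
  subgoal by (simp add: resB_def homD)
  subgoal by (simp add: resB_def homD)
  subgoal for x by (cases x) (auto simp: resB_def homD)
  subgoal for x by (simp add: resB_def)
  done

lemma resB_comp: "g \<in> hom m l \<Longrightarrow> resB N (g \<circ> v) = g \<circ> resB N v"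
  by (rule ext) (simp add: resB_def homD)

lemma liftB_comp1: "u \<in> hom K M \<Longrightarrow> g \<in> hom M L \<Longrightarrow>
   liftB K L 1 (g \<circ> u) = liftB M L 1 g \<circ> liftB K M 1 u"
proof (rule ext)
  fix x assume u: "u \<in> hom K M" and g: "g \<in> hom M L"
  show "liftB K L 1 (g \<circ> u) x = (liftB M L 1 g \<circ> liftB K M 1 u) x"
  proof (cases x)
    case (Var i)
    show ?thesis
    proof (cases "1 \<le> i \<and> i \<le> K")
      case True
      then have "u x \<in> pts M" using homD(3)[OF u] Var by simp
      then show ?thesis using True Var liftB_pts[OF g] by (simp add: liftB_def)
    next
      case False
      then show ?thesis using Var by (auto simp: liftB_def)
    qed
  qed (auto simp: liftB_def)
qed

lemma liftB_comp2: "g \<in> hom k j \<Longrightarrow> u \<in> hom (j+n) m \<Longrightarrow>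
   liftB (k+n) m 1 (u \<circ> liftB k j n g) = liftB (j+n) m 1 u \<circ> liftB k j (Suc n) g"
proof (rule ext)
  fix x assume g: "g \<in> hom k j" and u: "u \<in> hom (j+n) m"
  show "liftB (k+n) m 1 (u \<circ> liftB k j n g) x = (liftB (j+n) m 1 u \<circ> liftB k j (Suc n) g) x"
  proof (cases x)
    case (Var i)
    consider "1 \<le> i \<and> i \<le> k" | "k < i \<and> i \<le> k + n" | "i = Suc (k+n)" | "i < 1 \<or> i > Suc (k+n)"
      by linarith
    then show ?thesis
    proof cases
      case 1
      then have "g x \<in> pts j" using homD(3)[OF g] Var by simp
      then have "g x \<in> pts (j+n)" by (cases "g x") auto
      then show ?thesis using 1 Var liftB_pts[OF u, of "g x"] by (simp add: liftB_def)
    next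
      case 2 then show ?thesis using Var by (auto simp: liftB_def)
    next
      case 3 then show ?thesis using Var by (auto simp: liftB_def)
    next
      case 4 then show ?thesis using Var by (auto simp: liftB_def homD[OF u])
    qed
  qed (auto simp: liftB_def)
qed

lemma evB_lift: "g \<in> hom m l \<Longrightarrow> t \<in> pts m \<Longrightarrow>
   evB l (g t) \<circ> liftB m l 1 g = g \<circ> evB m t"
proof (rule ext)
  fix x assume g: "g \<in> hom m l" and t: "t \<in> pts m"
  show "(evB l (g t) \<circ> liftB m l 1 g) x = (g \<circ> evB m t) x"
  proof (cases "x \<in> pts m")
    case True
    then have "g x \<in> pts l" using homD(3)[OF g] by simp
    then have "g x \<noteq> Var (Suc l)" by auto
    moreover have "x \<noteq> Var (Suc m)" using True by auto
    ultimately show ?thesis using True liftB_pts[OF g True] \<open>g x \<in> pts l\<close> by (simp add: evB_def)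
  next
    case False
    show ?thesis
    proof (cases "x = Var (Suc m)")
      case True then show ?thesis by (simp add: evB_def liftB_def)
    next
      case F2: False
      have "liftB m l 1 g x = Bot" using False F2
        by (cases x) (auto simp: liftB_def)
      then show ?thesis using False F2 by (simp add: evB_def homD[OF g])
    qed
  qed
qed

lemma csetD: assumes "is_cset X"
  shows "\<And>n m f x. f \<in> hom n m \<Longrightarrow> x \<in> cells X n \<Longrightarrow> act X n m f x \<in> cells X m"
    "\<And>n x. x \<in> cells X n \<Longrightarrow> act X n n (idB n) x = x"
    "\<And>n m l f g x. f \<in> hom n m \<Longrightarrow> g \<in> hom m l \<Longrightarrow> x \<in> cells X n \<Longrightarrow>
        act X m l g (act X n m f x) = act X n l (g \<circ> f) x"
  using assms unfolding is_cset_def by blast+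

definition bxB :: "'a cset \<Rightarrow> nat \<Rightarrow> nat \<Rightarrow> bool \<Rightarrow> (nat \<Rightarrow> (pt \<Rightarrow> pt) \<Rightarrow> 'a \<times> 'a)
   \<Rightarrow> (nat \<Rightarrow> (pt \<Rightarrow> pt) \<Rightarrow> 'a) \<Rightarrow> nat \<Rightarrow> (pt \<Rightarrow> pt) \<Rightarrow> 'a" where
 "bxB A k n e a b = (\<lambda>m v. if v \<in> boxset k (Suc n) e m then
     (if v (Var (Suc (k+n))) = Bot then fst (a m (resB (k+n) v))
      else if v (Var (Suc (k+n))) = Top then snd (a m (resB (k+n) v))
      else act A (Suc m) m (evB m (v (Var (Suc (k+n))))) (b m (resB (k+n) v))) else undefined)"

lemma boxset_hom: "u \<in> boxset k n e m \<Longrightarrow> u \<in> hom (k+n) m"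
  by (simp add: boxset_def)

lemma endpt_cases: "endpt d = Bot \<or> endpt d = Top"
  by (simp add: endpt_def)

lemma box_res: assumes "v \<in> boxset k (Suc n) e m" "v (Var (Suc (k+n))) \<noteq> Bot"
    "v (Var (Suc (k+n))) \<noteq> Top"
  shows "resB (k+n) v \<in> boxset k n e m"
proof -
  have vh: "v \<in> hom (Suc (k+n)) m" using assms(1) by (simp add: boxset_def)
  obtain i d where i: "i \<in> {1..Suc n}" "(i,d) \<noteq> (1,e)" "v (Var (k+i)) = endpt d"
    using assms(1) unfolding boxset_def by blast
  have "i \<noteq> Suc n" using i(3) assms(2,3) endpt_cases[of d] by auto
  then have "i \<in> {1..n}" using i(1) by auto
  then have "resB (k+n) v (Var (k+i)) = endpt d" using i(3) by (simp add: resB_def)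
  then show ?thesis using resB_hom[OF vh] \<open>i \<in> {1..n}\<close> i(2) by (auto simp: boxset_def)
qed

lemma box_ext: assumes "v \<in> hom (Suc (k+n)) m" "v (Var (Suc (k+n))) = endpt d" "1 \<le> n"
  shows "v \<in> boxset k (Suc n) e m"
proof -
  have "Suc n \<in> {1..Suc n}" "(Suc n, d) \<noteq> (1,e)" "v (Var (k + Suc n)) = endpt d"
    "v \<in> hom (k + Suc n) m" using assms by auto
  then show ?thesis unfolding boxset_def by blast
qed

lemma box_ext2: assumes "v \<in> hom (Suc (k+n)) m" "resB (k+n) v \<in> boxset k n e m"
  shows "v \<in> boxset k (Suc n) e m"
proof -
  obtain i d where i: "i \<in> {1..n}" "(i,d) \<noteq> (1,e)" "resB (k+n) v (Var (k+i)) = endpt d"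
    using assms(2) unfolding boxset_def by blast
  then have "v (Var (k+i)) = endpt d" by (simp add: resB_def)
  moreover have "i \<in> {1..Suc n}" "v \<in> hom (k + Suc n) m" using assms(1) i by auto
  ultimately show ?thesis using i(2) unfolding boxset_def by blast
qed

lemma g_endpt: "g \<in> hom m l \<Longrightarrow> g (endpt d) = endpt d"
  by (simp add: endpt_def homD)

lemma box_comp: assumes "u \<in> boxset k n e m" "g \<in> hom m l" shows "g \<circ> u \<in> boxset k n e l"
proof -
  obtain i d where i: "i \<in> {1..n}" "(i,d) \<noteq> (1,e)" "u (Var (k+i)) = endpt d" "u \<in> hom (k+n) m"
    using assms(1) unfolding boxset_def by blast
  then have "(g \<circ> u) (Var (k+i)) = endpt d" using g_endpt[OF assms(2)] by simp
  moreover have "g \<circ> u \<in> hom (k+n) l" using comp_hom[OF i(4) assms(2)] .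
  ultimately show ?thesis using i(1,2) unfolding boxset_def by blast
qed


lemma idB_hom_Suc: "idB m \<in> hom m (Suc m)"
  apply (rule homI) apply (simp_all add: idB_def)
  subgoal for x by (cases x) auto
  done

lemma hom_range: "u \<in> hom N m \<Longrightarrow> u x \<in> pts m"
  by (cases "x \<in> pts N") (auto simp: homD)

lemma idB_comp: "u \<in> hom N m \<Longrightarrow> idB m \<circ> u = u"
  by (rule ext) (simp add: idB_def hom_range)

lemma idB_act: assumes "is_cset X" "x \<in> cells X n" shows "act X n n (idB n) x = x"
  using csetD(2)[OF assms(1) assms(2)] .

lemma evB_lift_id: "evB (Suc m) (Var (Suc m)) \<circ> liftB m (Suc m) 1 (idB m) = idB (Suc m)"
proof (rule ext)
  fix x show "(evB (Suc m) (Var (Suc m)) \<circ> liftB m (Suc m) 1 (idB m)) x = idB (Suc m) x"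
    by (cases x) (auto simp: evB_def liftB_def idB_def)
qed

lemma resB_lift: "u \<in> hom N m \<Longrightarrow> resB N (liftB N m 1 u) = u"
proof (rule ext)
  fix x assume u: "u \<in> hom N m"
  show "resB N (liftB N m 1 u) x = u x"
  proof (cases "x \<in> pts N")
    case True then show ?thesis by (simp add: resB_def liftB_pts[OF u])
  next
    case False then show ?thesis by (simp add: resB_def homD(4)[OF u False])
  qed
qed

lemma resB_end: "u \<in> hom N m \<Longrightarrow> t \<in> pts m \<Longrightarrow> resB N (evB m t \<circ> liftB N m 1 u) = u"
proof (rule ext)
  fix x assume u: "u \<in> hom N m" and t: "t \<in> pts m"
  show "resB N (evB m t \<circ> liftB N m 1 u) x = u x"
  proof (cases "x \<in> pts N")
    case True
    then have "u x \<in> pts m" using homD(3)[OF u] by simp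
    then show ?thesis using True by (auto simp: resB_def liftB_pts[OF u] evB_def)
  qed (auto simp: resB_def homD[OF u])
qed

lemma lift_last: "liftB N m 1 u (Var (Suc N)) = Var (Suc m)"
  by (simp add: liftB_def)

lemma box_pull: assumes "w \<in> boxset j n' e m" "g \<in> hom k j"
  shows "w \<circ> liftB k j n' g \<in> boxset k n' e m"
proof -
  obtain i d where i: "i \<in> {1..n'}" "(i,d) \<noteq> (1,e)" "w (Var (j+i)) = endpt d" "w \<in> hom (j+n') m"
    using assms(1) unfolding boxset_def by blast
  have "liftB k j n' g (Var (k+i)) = Var (j+i)" using i(1) by (auto simp: liftB_def)
  then have "(w \<circ> liftB k j n' g) (Var (k+i)) = endpt d" using i(3) by simp
  moreover have "w \<circ> liftB k j n' g \<in> hom (k+n') m" using comp_hom[OF liftB_hom[OF assms(2)] i(4)] .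
  ultimately show ?thesis using i(1,2) unfolding boxset_def by blast
qed

lemma res_pull: assumes "g \<in> hom k j" "w Bot = Bot"
  shows "resB (k+n) (w \<circ> liftB k j (Suc n) g) = resB (j+n) w \<circ> liftB k j n g"
proof (rule ext)
  fix x
  have h: "liftB k j n g \<in> hom (k+n) (j+n)" using liftB_hom[OF assms(1)] .
  show "resB (k+n) (w \<circ> liftB k j (Suc n) g) x = (resB (j+n) w \<circ> liftB k j n g) x"
  proof (cases "x \<in> pts (k+n)")
    case True
    have eq: "liftB k j (Suc n) g x = liftB k j n g x" using True
      by (cases x) (auto simp: liftB_def)
    show ?thesis using True homD(3)[OF h True] by (simp add: resB_def eq)
  next
    case False then show ?thesis by (simp add: resB_def homD[OF h] assms(2))
  qed
qed

lemma pull_last: "liftB k j (Suc n) g (Var (Suc (k+n))) = Var (Suc (j+n))"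
  by (simp add: liftB_def)

lemma pb_bx: assumes "g \<in> hom k j"
  shows "pullback_along (boxset j (Suc n) e) (liftB k j (Suc n) g) (bxB A k n e a b)
   = bxB A j n e (pullback_along (fullcube j n) (liftB k j n g) a)
                 (pullback_along (boxset j n e) (liftB k j n g) b)"
proof (intro ext)
  fix m w
  show "pullback_along (boxset j (Suc n) e) (liftB k j (Suc n) g) (bxB A k n e a b) m w
   = bxB A j n e (pullback_along (fullcube j n) (liftB k j n g) a)
                 (pullback_along (boxset j n e) (liftB k j n g) b) m w"
  proof (cases "w \<in> boxset j (Suc n) e m")
    case True
    have wh: "w \<in> hom (Suc (j+n)) m" using True by (simp add: boxset_def)
    have wb: "w \<circ> liftB k j (Suc n) g \<in> boxset k (Suc n) e m" using box_pull[OF True assms] .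
    have rf: "resB (j+n) w \<in> fullcube j n m" using resB_hom[OF wh] by (simp add: fullcube_def)
    have rb: "w (Var (Suc (j+n))) \<noteq> Bot \<Longrightarrow> w (Var (Suc (j+n))) \<noteq> Top \<Longrightarrow> resB (j+n) w \<in> boxset j n e m"
      using box_res[OF True] by simp
    show ?thesis using True wb rf rb
      by (auto simp: pullback_along_def bxB_def res_pull[where w=w and n=n, OF assms homD(1)[OF wh]] pull_last)
  next
    case False then show ?thesis by (simp add: pullback_along_def bxB_def)
  qed
qed

context
  fixes A :: "'a cset" and k n e a b
  assumes A: "is_cset A"
    and sq: "kan_square (path_obj A) (prod_cset A A) (path_proj A) k n e a b"
begin

lemma sq_a: "u \<in> hom (k+n) m \<Longrightarrow> a m u \<in> cells A m \<times> cells A m"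
  "u \<in> hom (k+n) m \<Longrightarrow> g \<in> hom m l \<Longrightarrow> a l (g \<circ> u) = (act A m l g (fst (a m u)), act A m l g (snd (a m u)))"
  using sq by (auto simp: kan_square_def is_sub_map_def fullcube_def prod_cset_def)

lemma sq_b: "u \<in> boxset k n e m \<Longrightarrow> b m u \<in> cells A (Suc m)"
  "u \<in> boxset k n e m \<Longrightarrow> g \<in> hom m l \<Longrightarrow> b l (g \<circ> u) = act A (Suc m) (Suc l) (liftB m l 1 g) (b m u)"
  "u \<in> boxset k n e m \<Longrightarrow> path_proj A m (b m u) = a m u"
  using sq by (auto simp: kan_square_def is_sub_map_def path_obj_def)

lemma agree: assumes "u \<in> boxset k n e m"
  shows "act A (Suc m) m (evB m Bot) (b m u) = fst (a m u)"
    "act A (Suc m) m (evB m Top) (b m u) = snd (a m u)"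
proof -
  have "a m u = (act A (Suc m) m (evB m Bot) (b m u), act A (Suc m) m (evB m Top) (b m u))"
    using sq_b(3)[OF assms] by (simp add: path_proj_def endB_evB endpt_def)
  then show "act A (Suc m) m (evB m Bot) (b m u) = fst (a m u)"
    "act A (Suc m) m (evB m Top) (b m u) = snd (a m u)" by simp_all
qed

lemma key_nat: assumes "u \<in> boxset k n e m" "g \<in> hom m l" "t \<in> pts m"
  shows "act A (Suc l) l (evB l (g t)) (b l (g \<circ> u)) = act A m l g (act A (Suc m) m (evB m t) (b m u))"
proof -
  have gt: "g t \<in> pts l" using homD(3)[OF assms(2,3)] .
  have lh: "liftB m l 1 g \<in> hom (Suc m) (Suc l)" using liftB_hom[OF assms(2), of 1] by simp
  have "act A (Suc l) l (evB l (g t)) (b l (g \<circ> u))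
     = act A (Suc l) l (evB l (g t)) (act A (Suc m) (Suc l) (liftB m l 1 g) (b m u))"
    using sq_b(2)[OF assms(1,2)] by simp
  also have "\<dots> = act A (Suc m) l (evB l (g t) \<circ> liftB m l 1 g) (b m u)"
    using csetD(3)[OF A lh evB_hom[OF gt] sq_b(1)[OF assms(1)]] .
  also have "\<dots> = act A (Suc m) l (g \<circ> evB m t) (b m u)"
    using evB_lift[OF assms(2,3)] by simp
  also have "\<dots> = act A m l g (act A (Suc m) m (evB m t) (b m u))"
    using csetD(3)[OF A evB_hom[OF assms(3)] assms(2) sq_b(1)[OF assms(1)]] by simp
  finally show ?thesis .
qed

lemma bx_cells: assumes "v \<in> boxset k (Suc n) e m" shows "bxB A k n e a b m v \<in> cells A m"
proof -
  have vh: "v \<in> hom (Suc (k+n)) m" using assms by (simp add: boxset_def)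
  have t: "v (Var (Suc (k+n))) \<in> pts m" using homD(3)[OF vh] by simp
  have r: "resB (k+n) v \<in> hom (k+n) m" using resB_hom[OF vh] .
  show ?thesis
  proof (cases "v (Var (Suc (k+n))) = Bot \<or> v (Var (Suc (k+n))) = Top")
    case True then show ?thesis using sq_a(1)[OF r] assms by (auto simp: bxB_def)
  next
    case False
    then have rb: "resB (k+n) v \<in> boxset k n e m" using box_res[OF assms] by auto
    show ?thesis using False assms csetD(1)[OF A evB_hom[OF t] sq_b(1)[OF rb]]
      by (simp add: bxB_def)
  qed
qed

lemma bx_nat: assumes "v \<in> boxset k (Suc n) e m" "g \<in> hom m l"
  shows "bxB A k n e a b l (g \<circ> v) = act A m l g (bxB A k n e a b m v)"
proof -
  define t where "t = v (Var (Suc (k+n)))"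
  have vh: "v \<in> hom (Suc (k+n)) m" using assms by (simp add: boxset_def)
  have tp: "t \<in> pts m" using homD(3)[OF vh] by (simp add: t_def)
  have r: "resB (k+n) v \<in> hom (k+n) m" using resB_hom[OF vh] .
  have gv: "g \<circ> v \<in> boxset k (Suc n) e l" using box_comp[OF assms] .
  have rc: "resB (k+n) (g \<circ> v) = g \<circ> resB (k+n) v" using resB_comp[OF assms(2)] .
  have gvt: "(g \<circ> v) (Var (Suc (k+n))) = g t" by (simp add: t_def)
  show ?thesis
  proof (cases "t = Bot \<or> t = Top")
    case True
    then have "g t = t" using homD[OF assms(2)] by auto
    then show ?thesis using True assms gv sq_a(2)[OF r assms(2)]
      by (auto simp: bxB_def rc gvt t_def[symmetric])
  next
    case False
    then have rb: "resB (k+n) v \<in> boxset k n e m" using box_res[OF assms(1)] by (auto simp: t_def)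
    have gb: "g \<circ> resB (k+n) v \<in> boxset k n e l" using box_comp[OF rb assms(2)] .
    have "act A m l g (bxB A k n e a b m v) = act A m l g (act A (Suc m) m (evB m t) (b m (resB (k+n) v)))"
      using False assms(1) by (simp add: bxB_def t_def[symmetric])
    also have "\<dots> = act A (Suc l) l (evB l (g t)) (b l (g \<circ> resB (k+n) v))"
      using key_nat[OF rb assms(2) tp] by simp
    also have "\<dots> = bxB A k n e a b l (g \<circ> v)"
      using gv agree[OF gb] by (auto simp: bxB_def rc t_def)
    finally show ?thesis by simp
  qed
qed

lemma bx_square: "kan_square A terminal_cset (\<lambda>m x. ()) k (Suc n) e (\<lambda>m u. ()) (bxB A k n e a b)"
proof -
  have "\<forall>m u. u \<notin> boxset k (Suc n) e m \<longrightarrow> bxB A k n e a b m u = undefined"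
    by (simp add: bxB_def)
  then show ?thesis
    unfolding kan_square_def is_sub_map_def extensional_on_def
    using bx_cells bx_nat by (simp add: terminal_cset_def)
qed

end


theorem lemma3p5:
  fixes A :: "'a cset"
  assumes "is_cset A"
    and "uniform_kan_complex A"
  shows "ukf (path_obj A) (prod_cset A A) (path_proj A)"
proof -
  note Ac = assms(1)
  obtain psi where psi: "is_ukf_structure A terminal_cset (\<lambda>m x. ()) psi"
    using assms(2) unfolding uniform_kan_complex_def ukf_def by blast
  define phi where "phi = (\<lambda>n e k a b m u. psi (Suc n) e k (\<lambda>m u. ()) (bxB A k n e a b) (Suc m)
       (liftB (k+n) m 1 u))"
  have "is_ukf_structure (path_obj A) (prod_cset A A) (path_proj A) phi"
    unfolding is_ukf_structure_def
  proof (intro allI impI, intro conjI)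
    fix n e k a b
    assume n: "1 \<le> n" and k: "1 \<le> k"
      and sq: "kan_square (path_obj A) (prod_cset A A) (path_proj A) k n e a b"
    define Psi where "Psi = psi (Suc n) e k (\<lambda>m u. ()) (bxB A k n e a b)"
    have phiP: "\<And>m u. phi n e k a b m u = Psi (Suc m) (liftB (k+n) m 1 u)"
      by (simp add: phi_def Psi_def)
    have sn: "1 \<le> Suc n" by simp
    note R = psi[unfolded is_ukf_structure_def, rule_format, OF sn k bx_square[OF Ac sq], folded Psi_def]
    have P1: "\<And>m u. u \<in> hom (Suc (k+n)) m \<Longrightarrow> Psi m u \<in> cells A m"
      "\<And>m l u g. u \<in> hom (Suc (k+n)) m \<Longrightarrow> g \<in> hom m l \<Longrightarrow> Psi l (g \<circ> u) = act A m l g (Psi m u)"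
      using R[THEN conjunct1] unfolding is_sub_map_def fullcube_def by simp_all
    have P2: "\<And>m u. u \<in> boxset k (Suc n) e m \<Longrightarrow> Psi m u = bxB A k n e a b m u"
      using R[THEN conjunct2, THEN conjunct1] by blast
    have P3: "\<And>j g m u. 1 \<le> j \<Longrightarrow> g \<in> hom k j \<Longrightarrow> u \<in> fullcube j (Suc n) m \<Longrightarrow>
              Psi m (u \<circ> liftB k j (Suc n) g) =
              psi (Suc n) e j (pullback_along (fullcube j (Suc n)) (liftB k j (Suc n) g) (\<lambda>m u. ()))
                        (pullback_along (boxset j (Suc n) e) (liftB k j (Suc n) g) (bxB A k n e a b)) m u"
      using R[THEN conjunct2, THEN conjunct2, THEN conjunct2] by blast
    have lh: "\<And>u m. u \<in> hom (k+n) m \<Longrightarrow> liftB (k+n) m 1 u \<in> hom (Suc (k+n)) (Suc m)"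
      using liftB_hom[where n=1] by simp
    show "is_sub_map (k + n) (fullcube k n) (path_obj A) (phi n e k a b)"
      unfolding is_sub_map_def
    proof (intro conjI allI impI)
      fix m u assume u: "u \<in> fullcube k n m"
      then show "phi n e k a b m u \<in> cells (path_obj A) m"
        using P1(1)[OF lh] by (simp add: phiP path_obj_def fullcube_def)
    next
      fix m l u g assume u: "u \<in> fullcube k n m" and g: "g \<in> hom m l"
      have uh: "u \<in> hom (k+n) m" using u by (simp add: fullcube_def)
      have gl: "liftB m l 1 g \<in> hom (Suc m) (Suc l)" using liftB_hom[OF g, of 1] by simp
      show "phi n e k a b l (g \<circ> u) = act (path_obj A) m l g (phi n e k a b m u)"
        using P1(2)[OF lh[OF uh] gl] liftB_comp1[OF uh g]
        by (simp add: phiP path_obj_def)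
    qed
    show "\<forall>m u. u \<in> boxset k n e m \<longrightarrow> phi n e k a b m u = b m u"
    proof (intro allI impI)
      fix m u assume u: "u \<in> boxset k n e m"
      have uh: "u \<in> hom (k+n) m" using u by (simp add: boxset_def)
      define v where "v = liftB (k+n) m 1 u"
      have rv: "resB (k+n) v = u" using resB_lift[OF uh] by (simp add: v_def)
      have vb: "v \<in> boxset k (Suc n) e (Suc m)"
      proof -
        have "idB m \<circ> u \<in> boxset k n e (Suc m)" using box_comp[OF u idB_hom_Suc] .
        then have "resB (k+n) v \<in> boxset k n e (Suc m)" using rv idB_comp[OF uh] by simp
        then show ?thesis using box_ext2[OF lh[OF uh]] by (simp add: v_def)
      qed
      have vl: "v (Var (Suc (k+n))) = Var (Suc m)" by (simp add: v_def liftB_def)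
      have bcell: "b m u \<in> cells A (Suc m)" using sq_b(1)[OF Ac sq u] .
      have "b (Suc m) u = b (Suc m) (idB m \<circ> u)" using idB_comp[OF uh] by simp
      also have "\<dots> = act A (Suc m) (Suc (Suc m)) (liftB m (Suc m) 1 (idB m)) (b m u)"
        using sq_b(2)[OF Ac sq u idB_hom_Suc] .
      finally have bs: "b (Suc m) u = act A (Suc m) (Suc (Suc m)) (liftB m (Suc m) 1 (idB m)) (b m u)" .
      have eh: "evB (Suc m) (Var (Suc m)) \<in> hom (Suc (Suc m)) (Suc m)" by (rule evB_hom) simp
      have lh2: "liftB m (Suc m) 1 (idB m) \<in> hom (Suc m) (Suc (Suc m))"
        using liftB_hom[OF idB_hom_Suc, of m 1] by simp
      have "phi n e k a b m u = Psi (Suc m) v" by (simp add: phiP v_def)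
      also have "\<dots> = bxB A k n e a b (Suc m) v" using P2[OF vb] .
      also have "\<dots> = act A (Suc (Suc m)) (Suc m) (evB (Suc m) (Var (Suc m))) (b (Suc m) u)"
        using vb vl rv by (simp add: bxB_def)
      also have "\<dots> = act A (Suc m) (Suc m) (idB (Suc m)) (b m u)"
        unfolding bs csetD(3)[OF Ac lh2 eh bcell] evB_lift_id ..
      also have "\<dots> = b m u" using idB_act[OF Ac bcell] .
      finally show "phi n e k a b m u = b m u" .
    qed
    show "\<forall>m u. u \<in> fullcube k n m \<longrightarrow> path_proj A m (phi n e k a b m u) = a m u"
    proof (intro allI impI)
      fix m u assume u: "u \<in> fullcube k n m"
      have uh: "u \<in> hom (k+n) m" using u by (simp add: fullcube_def)
      define v where "v = liftB (k+n) m 1 u"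
      have vh: "v \<in> hom (Suc (k+n)) (Suc m)" using lh[OF uh] by (simp add: v_def)
      have endf: "act A (Suc m) m (endB m d) (phi n e k a b m u)
          = (if d then snd (a m u) else fst (a m u))" for d
      proof -
        have tp: "endpt d \<in> pts m" by (simp add: endpt_def)
        define w where "w = evB m (endpt d) \<circ> v"
        have wh: "w \<in> hom (Suc (k+n)) m" using comp_hom[OF vh evB_hom[OF tp]] by (simp add: w_def)
        have wl: "w (Var (Suc (k+n))) = endpt d" by (simp add: w_def v_def liftB_def evB_def)
        have wb: "w \<in> boxset k (Suc n) e m" using box_ext[OF wh wl n] .
        have rw: "resB (k+n) w = u" using resB_end[OF uh tp] by (simp add: w_def v_def)
        have "act A (Suc m) m (endB m d) (phi n e k a b m u) = Psi m w"
          using P1(2)[OF vh evB_hom[OF tp]] by (simp add: phiP endB_evB w_def v_def)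
        also have "\<dots> = bxB A k n e a b m w" using P2[OF wb] .
        also have "\<dots> = (if d then snd (a m u) else fst (a m u))"
          using wb wl rw by (simp add: bxB_def endpt_def)
        finally show ?thesis .
      qed
      show "path_proj A m (phi n e k a b m u) = a m u"
        using endf[of False] endf[of True] by (simp add: path_proj_def)
    qed
    show "\<forall>j g. 1 \<le> j \<longrightarrow> g \<in> hom k j \<longrightarrow>
           (\<forall>m u. u \<in> fullcube j n m \<longrightarrow>
              phi n e k a b m (u \<circ> liftB k j n g) =
              phi n e j (pullback_along (fullcube j n) (liftB k j n g) a)
                        (pullback_along (boxset j n e) (liftB k j n g) b) m u)"
    proof (intro allI impI)
      fix j g m u assume j: "1 \<le> j" and g: "g \<in> hom k j" and u: "u \<in> fullcube j n m"
      have uh: "u \<in> hom (j+n) m" using u by (simp add: fullcube_def)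
      have vf: "liftB (j+n) m 1 u \<in> fullcube j (Suc n) (Suc m)"
        using liftB_hom[OF uh, of 1] by (simp add: fullcube_def)
      have unit: "pullback_along (fullcube j (Suc n)) (liftB k j (Suc n) g) (\<lambda>m u. ()) = (\<lambda>m u. ())"
        by (intro ext) simp
      have "phi n e k a b m (u \<circ> liftB k j n g) = Psi (Suc m) (liftB (j+n) m 1 u \<circ> liftB k j (Suc n) g)"
        unfolding phiP liftB_comp2[OF g uh] by (rule refl)
      also have "\<dots> = psi (Suc n) e j (\<lambda>m u. ())
          (pullback_along (boxset j (Suc n) e) (liftB k j (Suc n) g) (bxB A k n e a b)) (Suc m) (liftB (j+n) m 1 u)"
        using P3[OF j g vf] unit by simp
      also have "\<dots> = phi n e j (pullback_along (fullcube j n) (liftB k j n g) a)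
                        (pullback_along (boxset j n e) (liftB k j n g) b) m u"
        by (simp add: phi_def pb_bx[OF g])
      finally show "phi n e k a b m (u \<circ> liftB k j n g) =
              phi n e j (pullback_along (fullcube j n) (liftB k j n g) a)
                        (pullback_along (boxset j n e) (liftB k j n g) b) m u" .
    qed
  qed
  then show ?thesis unfolding ukf_def by blast
qed

end
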